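(* Consider a connected open set $U\subset \mathrm{K}^{\circ}$. (i) For any $\omega\in \Sigma$, there is an $N\in \mathbb{N}_0$ such that $\mathcal{K}_{\omega}^N(U)$ is connected and $\mathcal{K}^N_{\omega}(U)\cap \mathbf{A}\neq \emptyset$. (ii) There are $\omega \in \Sigma, M\in \mathbb{N}_0$ such that $\mathcal{K}^M_\omega(U) \supseteq A_\alpha \cap A_\beta$ for some $\alpha, \beta \in \{1,2,3\}, \alpha\neq \beta$.
   Context: Fix a parameter $v\in(0,1/2)$. Let $\mathrm{K}^{\circ}$ denote the Kasner circle $\{(\Sigma_+,\Sigma_-)\,:\,\Sigma_+^2+\Sigma_-^2=1\}$, parametrized by the angle $\varphi$ via $(\Sigma_+,\Sigma_-)=(\cos\varphi,\sin\varphi)$. Let $A_1:=\{\Sigma_+\ge v\}\cap \mathrm{K}^{\circ}$, i.e. $\varphi\in[-\arccos v,\arccos v]$, and let $A_2,A_3$ be its images under rotation by $\pm 2\pi/3$ (namely $A_2=\{-(\Sigma_++\sqrt3\Sigma_-)/2\ge v\}$, $A_3=\{-(\Sigma_+-\sqrt3\Sigma_-)/2\ge v\}$). On $A_1$ define $\mathcal{K}_1(\varphi):=\pi-2\arctan\big(\tfrac{1+v}{1-v}\tan(\varphi/2)\big)$, and let $\mathcal{K}_2,\mathcal{K}_3$ on $A_2,A_3$ be the maps obtained from $\mathcal{K}_1$ by the same rotations. Set $\mathbf{A}:=(A_1\cap A_2)\cup(A_2\cap A_3)\cup(A_1\cap A_3)$. For $\mu\in\{1,2\},\nu\in\{2,3\},\zeta\in\{1,3\}$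 define $\mathcal{K}_{\mu\nu\zeta}:\mathrm{K}^{\circ}\to\mathrm{K}^{\circ}$ by $\mathcal{K}_{\mu\nu\zeta}(p)=\mathcal{K}_\alpha(p)$ if $p\in A_\alpha\setminus\mathbf{A}$, $=\mathcal{K}_\mu(p)$ if $p\in A_1\cap A_2$, $=\mathcal{K}_\nu(p)$ if $p\in A_2\cap A_3$, $=\mathcal{K}_\zeta(p)$ if $p\in A_1\cap A_3$. Let $\Sigma$ be the space of sequences $\omega=(\mu_n,\nu_n,\zeta_n)_{n\ge1}$ with $\mu_n\in\{1,2\},\nu_n\in\{2,3\},\zeta_n\in\{1,3\}$, and for $\omega=(\omega_n)$ set $\mathcal{K}^n_\omega:=\mathcal{K}_{\omega_n}\circ\cdots\circ\mathcal{K}_{\omega_1}$, $\mathcal{K}^0_\omega=\mathrm{Id}$. *)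

theory Defs
  imports "HOL-Analysis.Analysis"
begin

text \<open>The Kasner circle, as the unit circle in the complex plane:
  a point p corresponds to (Sigma_+, Sigma_-) = (Re p, Im p) = (cos phi, sin phi).\<close>
definition KC :: "complex set" where
  "KC = sphere 0 1"

definition Aarc :: "real \<Rightarrow> nat \<Rightarrow> complex set" where
  "Aarc v a =
     (if a = 1 then {p \<in> KC. Re p \<ge> v}
      else if a = 2 then {p \<in> KC. - (Re p + sqrt 3 * Im p) / 2 \<ge> v}
      else {p \<in> KC. - (Re p - sqrt 3 * Im p) / 2 \<ge> v})"

definition bfA :: "real \<Rightarrow> complex set" where
  "bfA v = (Aarc v 1 \<inter> Aarc v 2) \<union> (Aarc v 2 \<inter> Aarc v 3) \<union> (Aarc v 1 \<inter> Aarc v 3)"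

definition K1 :: "real \<Rightarrow> complex \<Rightarrow> complex" where
  "K1 v p = cis (pi - 2 * arctan ((1 + v) / (1 - v) * tan (Arg p / 2)))"

text \<open>K_2, K_3 obtained from K_1 by the rotations carrying A_1 onto A_2, A_3.
  A_2 is the rotation of A_1 by -2pi/3, A_3 the rotation by +2pi/3.\<close>
definition Kmap :: "real \<Rightarrow> nat \<Rightarrow> complex \<Rightarrow> complex" where
  "Kmap v a p =
     (if a = 1 then K1 v p
      else if a = 2 then cis (- 2 * pi / 3) * K1 v (cis (2 * pi / 3) * p)
      else cis (2 * pi / 3) * K1 v (cis (- 2 * pi / 3) * p))"

definition Kchoice :: "real \<Rightarrow> nat \<times> nat \<times> nat \<Rightarrow> complex \<Rightarrow> complex" where
  "Kchoice v w p =
     (case w of (mu, nu, zeta) \<Rightarrow>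
       (if p \<in> Aarc v 1 \<inter> Aarc v 2 then Kmap v mu p
        else if p \<in> Aarc v 2 \<inter> Aarc v 3 then Kmap v nu p
        else if p \<in> Aarc v 1 \<inter> Aarc v 3 then Kmap v zeta p
        else if p \<in> Aarc v 1 then Kmap v 1 p
        else if p \<in> Aarc v 2 then Kmap v 2 p
        else Kmap v 3 p))"

text \<open>The sequence space Sigma. Sequences are indexed from 0: omega n here is the
  paper's omega_{n+1}.\<close>
definition SigmaSp :: "(nat \<Rightarrow> nat \<times> nat \<times> nat) set" where
  "SigmaSp = {\<omega>. \<forall>n. \<omega> n \<in> {1,2} \<times> {2,3} \<times> {1,3}}"

fun Kiter :: "real \<Rightarrow> (nat \<Rightarrow> nat \<times> nat \<times> nat) \<Rightarrow> nat \<Rightarrow> complex \<Rightarrow> complex" where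
  "Kiter v \<omega> 0 = id"
| "Kiter v \<omega> (Suc n) = Kchoice v (\<omega> n) \<circ> Kiter v \<omega> n"

end

theory Submission
  imports Defs
begin


definition cc :: "real \<Rightarrow> real" where "cc v = (1+v)/(1-v)"
definition psi :: "real \<Rightarrow> real \<Rightarrow> real" where
  "psi v t = pi - 2 * arctan (cc v * tan (t/2))"

lemma alg1: fixes c T C :: real shows
 "2 * (inverse (1 + (c*T)\<^sup>2) * (c * (inverse (C\<^sup>2) * (1/2)))) - lam * 1 = c * (inverse C)\<^sup>2 / (1 + c\<^sup>2*T\<^sup>2) - lam"
proof -
  have "2 * (inverse (1 + (c*T)\<^sup>2) * (c * (inverse (C\<^sup>2) * (1/2)))) = inverse (1 + (c*T)\<^sup>2) * (c * inverse (C\<^sup>2))" by simp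
  also have "... = c * (inverse C)\<^sup>2 / (1 + c\<^sup>2*T\<^sup>2)" by (simp add: divide_inverse power_mult_distrib power_inverse)
  finally show ?thesis by (simp only: mult_1_right)
qed

lemma deriv_G:
  assumes "cos (t/2) \<noteq> 0"
  shows "DERIV (\<lambda>t. 2 * arctan (c * tan (t/2)) - lam * t) t :>
     c * (1 + (tan (t/2))\<^sup>2) / (1 + c\<^sup>2 * (tan (t/2))\<^sup>2) - lam"
proof -
  have "DERIV (\<lambda>t. 2 * arctan (c * tan (t/2)) - lam * t) t :>
     2 * (inverse (1 + (c * tan (t/2))\<^sup>2) * (c * (inverse ((cos (t/2))\<^sup>2) * (1/2)))) - lam * 1"
    by (rule derivative_eq_intros DERIV_arctan DERIV_tan assms refl | simp)+
  moreover have "2 * (inverse (1 + (c * tan (t/2))\<^sup>2) * (c * (inverse ((cos (t/2))\<^sup>2) * (1/2)))) - lam * 1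
     = c * (1 + (tan (t/2))\<^sup>2) / (1 + c\<^sup>2 * (tan (t/2))\<^sup>2) - lam"
  proof -
    have "2 * (inverse (1 + (c * tan (t/2))\<^sup>2) * (c * (inverse ((cos (t/2))\<^sup>2) * (1/2)))) - lam * 1
       = c * (inverse (cos (t/2)))\<^sup>2 / (1 + c\<^sup>2 * (tan (t/2))\<^sup>2) - lam"
      by (rule alg1)
    then show ?thesis unfolding tan_sec[OF assms] .
  qed
  ultimately show ?thesis by simp
qed

lemma mono_gain:
  assumes "-pi < p" "p \<le> q" "q < pi"
    and bnd: "\<And>t. p \<le> t \<Longrightarrow> t \<le> q \<Longrightarrow> lam * (1 + c\<^sup>2 * (tan (t/2))\<^sup>2) \<le> c * (1 + (tan (t/2))\<^sup>2)"
  shows "2 * arctan (c * tan (p/2)) - lam * p \<le> 2 * arctan (c * tan (q/2)) - lam * q"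
proof (rule DERIV_nonneg_imp_nondecreasing[OF assms(2)])
  fix x assume x: "p \<le> x" "x \<le> q"
  have "cos (x/2) > 0" using x assms by (intro cos_gt_zero_pi) auto
  then have c0: "cos (x/2) \<noteq> 0" by simp
  have pos: "1 + c\<^sup>2 * (tan (x/2))\<^sup>2 > 0" by (simp add: add_pos_nonneg)
  have "0 \<le> c * (1 + (tan (x/2))\<^sup>2) / (1 + c\<^sup>2 * (tan (x/2))\<^sup>2) - lam"
    using bnd[OF x] pos by (simp add: field_simps)
  then show "\<exists>y. DERIV (\<lambda>t. 2 * arctan (c * tan (t/2)) - lam * t) x :> y \<and> 0 \<le> y"
    using deriv_G[OF c0] by blast
qed

definition aa :: "real \<Rightarrow> real" where "aa v = arccos v"
definition ee :: "real \<Rightarrow> real" where "ee v = arccos v - pi/3"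
definition bb :: "real \<Rightarrow> real" where "bb v = 2*pi/3 - arccos v"
definition lam :: "real \<Rightarrow> real" where "lam v = 4 * cc v / (3 + (cc v)\<^sup>2)"

locale kas =
  fixes v :: real
  assumes v0: "0 < v" and v1: "v < 1/2"
begin

lemma a_bounds: "pi/3 < aa v" "aa v < pi/2" "cos (aa v) = v"
proof -
  have "arccos (1/2) < arccos v" using v0 v1 by (intro arccos_less_arccos) auto
  moreover have "arccos (1/2) = pi/3" using arccos_cos[of "pi/3"] cos_60 by simp
  ultimately show "pi/3 < aa v" by (simp add: aa_def)
  have "arccos v < arccos 0" using v0 v1 by (intro arccos_less_arccos) auto
  then show "aa v < pi/2" by (simp add: aa_def)
  show "cos (aa v) = v" using v0 v1 by (simp add: aa_def)
qed

lemma e_bounds: "0 < ee v" "ee v < pi/6" "ee v < bb v" "pi/6 < bb v" "bb v < pi/3"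
  "aa v = pi/3 + ee v" "bb v = pi/3 - ee v"
  using a_bounds by (auto simp: ee_def bb_def aa_def)

lemma c_bounds: "1 < cc v" "cc v < 3"
  using v0 v1 by (auto simp: cc_def field_simps)

lemma lam_gt1: "1 < lam v"
proof -
  have "(cc v - 1) * (3 - cc v) > 0" using c_bounds by simp
  then have "3 + (cc v)\<^sup>2 < 4 * cc v" by (simp add: algebra_simps power2_eq_square)
  then show ?thesis by (simp add: lam_def field_simps add_pos_nonneg)
qed

lemma tan_half_a: "(tan (aa v / 2))\<^sup>2 = (1 - v) / (1 + v)"
proof -
  have co: "cos (aa v / 2) > 0" using a_bounds by (intro cos_gt_zero_pi) auto
  have "cos (2 * (aa v / 2)) = 2 * cos (aa v / 2) ^ 2 - 1" by (rule cos_double_cos)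
  then have c2: "(cos (aa v / 2))\<^sup>2 = (1 + v)/2" using a_bounds by simp
  have s2: "(sin (aa v / 2))\<^sup>2 = (1 - v)/2" using sin_cos_squared_add[of "aa v / 2"] c2 by (simp add: field_simps; linarith)
  have "(tan (aa v / 2))\<^sup>2 = (sin (aa v / 2))\<^sup>2 / (cos (aa v / 2))\<^sup>2" by (simp add: tan_def power_divide)
  also have "\<dots> = ((1-v)/2) / ((1+v)/2)" by (simp only: s2 c2)
  also have "\<dots> = (1-v)/(1+v)" using v0 by (simp add: field_simps)
  finally show ?thesis .
qed

lemma tan_sq_mono:
  assumes "\<bar>t\<bar> \<le> y" "y < pi"
  shows "(tan (t/2))\<^sup>2 \<le> (tan (y/2))\<^sup>2"
proof -
  have "tan (\<bar>t\<bar>/2) \<le> tan (y/2)" using assms by (intro tan_mono_le) auto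
  moreover have "0 \<le> tan (\<bar>t\<bar>/2)"
  proof (cases "t = 0")
    case False then show ?thesis using assms by (intro less_imp_le[OF tan_gt_zero]) auto
  qed simp
  moreover have "(tan (\<bar>t\<bar>/2))\<^sup>2 = (tan (t/2))\<^sup>2"
    by (cases "t \<ge> 0") (auto simp: abs_if)
  ultimately show ?thesis by (metis power_mono)
qed

lemma cT_le1: assumes "\<bar>t\<bar> \<le> aa v" shows "cc v * (tan (t/2))\<^sup>2 \<le> 1"
proof -
  have "(tan (t/2))\<^sup>2 \<le> (1 - v) / (1 + v)"
    using tan_sq_mono[OF assms] a_bounds tan_half_a by simp
  then have "cc v * (tan (t/2))\<^sup>2 \<le> cc v * ((1 - v) / (1 + v))"
    using c_bounds by (intro mult_left_mono) auto
  also have "\<dots> = 1" using v0 v1 by (simp add: cc_def)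
  finally show ?thesis .
qed

lemma T_le3: assumes "\<bar>t\<bar> \<le> pi/3" shows "(tan (t/2))\<^sup>2 \<le> 1/3"
proof -
  have "(tan (t/2))\<^sup>2 \<le> (tan ((pi/3)/2))\<^sup>2" using tan_sq_mono[OF assms] by simp
  also have "(pi/3)/2 = pi/6" by simp
  finally show ?thesis by (simp add: tan_30 power_divide)
qed

lemma bnd1: assumes "\<bar>t\<bar> \<le> aa v"
  shows "1 * (1 + (cc v)\<^sup>2 * (tan (t/2))\<^sup>2) \<le> cc v * (1 + (tan (t/2))\<^sup>2)"
proof -
  have "0 \<le> (cc v - 1) * (1 - cc v * (tan (t/2))\<^sup>2)"
    using cT_le1[OF assms] c_bounds by simp
  then show ?thesis by (simp add: algebra_simps power2_eq_square)
qed

lemma bndl: assumes "\<bar>t\<bar> \<le> pi/3"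
  shows "lam v * (1 + (cc v)\<^sup>2 * (tan (t/2))\<^sup>2) \<le> cc v * (1 + (tan (t/2))\<^sup>2)"
proof -
  define u where "u = (tan (t/2))\<^sup>2"
  have u3: "u \<le> 1/3" using T_le3[OF assms] by (simp add: u_def)
  have "0 \<le> cc v * ((cc v)\<^sup>2 - 1) * (1 - 3*u)"
    using u3 c_bounds one_less_power[of "cc v" 2] by (intro mult_nonneg_nonneg) auto
  then have "4 * cc v * (1 + (cc v)\<^sup>2 * u) \<le> cc v * (1 + u) * (3 + (cc v)\<^sup>2)"
    by (simp add: algebra_simps power2_eq_square)
  moreover have "3 + (cc v)\<^sup>2 > 0" by (simp add: add_pos_nonneg)
  ultimately show ?thesis unfolding u_def[symmetric] lam_def
    by (simp add: field_simps)
qed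


lemma a_lt_pi: "aa v < pi" using a_bounds by simp

lemma psi_gain:
  assumes "- aa v \<le> s" "s \<le> p" "p \<le> q" "q \<le> t" "t \<le> aa v" "- (pi/3) \<le> p" "q \<le> pi/3"
  shows "(t - s) + (lam v - 1) * (q - p) \<le> psi v s - psi v t"
proof -
  have ab: "aa v < pi" "pi/3 < aa v" using a_bounds by auto
  have 1: "2 * arctan (cc v * tan (s/2)) - 1 * s \<le> 2 * arctan (cc v * tan (p/2)) - 1 * p"
    using assms ab by (intro mono_gain bnd1) auto
  have 2: "2 * arctan (cc v * tan (q/2)) - 1 * q \<le> 2 * arctan (cc v * tan (t/2)) - 1 * t"
    using assms ab by (intro mono_gain bnd1) auto
  have 3: "2 * arctan (cc v * tan (p/2)) - lam v * p \<le> 2 * arctan (cc v * tan (q/2)) - lam v * q"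
    using assms ab by (intro mono_gain bndl) auto
  have "(t - s) + (lam v - 1) * (q - p) = (t - s) + lam v * q - lam v * p - q + p"
    by (simp add: algebra_simps)
  then show ?thesis using 1 2 3 unfolding psi_def by linarith
qed

lemma psi_dec:
  assumes "- aa v \<le> s" "s \<le> t" "t \<le> aa v"
  shows "t - s \<le> psi v s - psi v t"
proof -
  have ab: "aa v < pi" "pi/3 < aa v" using a_bounds by auto
  have 1: "2 * arctan (cc v * tan (s/2)) - 1 * s \<le> 2 * arctan (cc v * tan (t/2)) - 1 * t"
    using assms ab by (intro mono_gain bnd1) auto
  then show ?thesis unfolding psi_def by linarith
qed

lemma psi_cont: "continuous_on {- aa v .. aa v} (psi v)"
proof -
  have "\<forall>x\<in>{- aa v .. aa v}. cos (x/2) \<noteq> 0"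
  proof
    fix x assume "x \<in> {- aa v .. aa v}"
    then have "cos (x/2) > 0" using a_bounds by (intro cos_gt_zero_pi) auto
    then show "cos (x/2) \<noteq> 0" by simp
  qed
  then show ?thesis unfolding psi_def by (intro continuous_intros) auto
qed

lemma psi_0: "psi v 0 = pi" by (simp add: psi_def)

end

definition cen :: "int \<Rightarrow> real" where "cen i = 2 * pi * of_int i / 3"
definition kidx :: "int \<Rightarrow> nat" where
  "kidx i = (if i mod 3 = 0 then 1 else if i mod 3 = 1 then 3 else 2)"
definition FF :: "real \<Rightarrow> int \<Rightarrow> real \<Rightarrow> real" where
  "FF v i x = cen i + psi v (x - cen i)"

lemma cis_per: "cis (y + 2 * pi * of_int m) = cis y"
proof -
  have "cis y * cis (2 * pi * of_int m) = cis (y + 2 * pi * of_int m)" by (rule cis_mult)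
  moreover have "cis (2 * pi * of_int m) = 1" by (rule cis_multiple_2pi) simp
  ultimately show ?thesis by simp
qed

lemma cos_per: "cos (y - 2 * pi * of_int m) = cos y"
  by (simp add: cos_diff)

lemma cis_eqI: "A = B + 2 * pi * of_int m \<Longrightarrow> cis A = cis B"
  using cis_per by simp

lemma cen_add: "cen (i + j) = cen i + cen j" by (simp add: cen_def field_simps)
lemma cen_diff: "cen i - cen j = 2 * pi * of_int (i - j) / 3" by (simp add: cen_def field_simps)
lemma cen_1: "cen 1 = 2*pi/3" by (simp add: cen_def)
lemma cen_3m: "cen (3*m) = 2 * pi * of_int m" by (simp add: cen_def)

lemma kidx_range: "kidx i \<in> {1,2,3}" by (simp add: kidx_def)

lemma kidx_eq: "kidx i = kidx j \<longleftrightarrow> i mod 3 = j mod 3"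
proof -
  have "i mod 3 \<in> {0,1,2}" "j mod 3 \<in> {0,1,2}" by auto
  then show ?thesis by (auto simp: kidx_def)
qed

lemma kidx_succ_ne: "kidx (i+1) \<noteq> kidx i"
  unfolding kidx_eq by presburger

lemma cos_ge_iff:
  assumes "0 \<le> a" "a \<le> pi"
  shows "cos a \<le> cos y \<longleftrightarrow> (\<exists>m::int. \<bar>y - 2 * pi * of_int m\<bar> \<le> a)"
proof
  assume h: "cos a \<le> cos y"
  define m where "m = \<lfloor>y / (2*pi) + 1/2\<rfloor>"
  define z where "z = y - 2 * pi * of_int m"
  have "\<bar>y / (2*pi) - of_int m\<bar> \<le> 1/2" unfolding m_def
    using of_int_floor_le[of "y / (2*pi) + 1/2"] real_of_int_floor_add_one_gt[of "y / (2*pi) + 1/2"]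
    by linarith
  then have "\<bar>z\<bar> \<le> pi" unfolding z_def
  proof -
    assume "\<bar>y / (2*pi) - of_int m\<bar> \<le> 1/2"
    then have "\<bar>(y - 2 * pi * of_int m) / (2*pi)\<bar> \<le> 1/2" by (simp add: field_simps)
    then show "\<bar>y - 2 * pi * of_int m\<bar> \<le> pi" by (simp add: abs_divide field_simps)
  qed
  have "cos z = cos y" unfolding z_def
    by (rule cos_per)
  then have "cos \<bar>z\<bar> = cos y" by (cases "z \<ge> 0") auto
  then have "cos a \<le> cos \<bar>z\<bar>" using h by simp
  then have "\<bar>z\<bar> \<le> a" using assms \<open>\<bar>z\<bar> \<le> pi\<close> by (subst (asm) cos_mono_le_eq) auto
  then show "\<exists>m::int. \<bar>y - 2 * pi * of_int m\<bar> \<le> a" unfolding z_def by blast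
next
  assume "\<exists>m::int. \<bar>y - 2 * pi * of_int m\<bar> \<le> a"
  then obtain m :: int where m: "\<bar>y - 2 * pi * of_int m\<bar> \<le> a" by blast
  define z where "z = y - 2 * pi * of_int m"
  have "cos z = cos y" unfolding z_def
    by (rule cos_per)
  then have "cos \<bar>z\<bar> = cos y" by (cases "z \<ge> 0") auto
  moreover have "cos a \<le> cos \<bar>z\<bar>" using assms m unfolding z_def by (subst cos_mono_le_eq) auto
  ultimately show "cos a \<le> cos y" by simp
qed




lemma cis_KC: "cis x \<in> KC" by (simp add: KC_def)

lemma sin120: "sin (2*pi/3) = sqrt 3 / 2" using sin_120' by (simp add: mult.commute)

lemma cos_p120: "cos (x + 2*pi/3) = - (cos x + sqrt 3 * sin x) / 2"
proof -
  have "cos (x + 2*pi/3) = cos x * cos (2*pi/3) - sin x * sin (2*pi/3)" by (rule cos_add)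
  also have "\<dots> = cos x * (-1/2) - sin x * (sqrt 3 / 2)" by (simp only: cos_120 sin120)
  finally show ?thesis by simp
qed

lemma cos_m120: "cos (x - 2*pi/3) = - (cos x - sqrt 3 * sin x) / 2"
proof -
  have "cos (x - 2*pi/3) = cos x * cos (2*pi/3) + sin x * sin (2*pi/3)" by (rule cos_diff)
  also have "\<dots> = cos x * (-1/2) + sin x * (sqrt 3 / 2)" by (simp only: cos_120 sin120)
  finally show ?thesis by simp
qed

lemma Aarc1_cis: "cis x \<in> Aarc v 1 \<longleftrightarrow> v \<le> cos x"
  by (simp add: Aarc_def cis_KC)
lemma Aarc2_cis: "cis x \<in> Aarc v 2 \<longleftrightarrow> v \<le> cos (x + 2*pi/3)"
  by (simp add: Aarc_def cis_KC cos_p120)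
lemma Aarc3_cis: "cis x \<in> Aarc v 3 \<longleftrightarrow> v \<le> cos (x - 2*pi/3)"
  by (simp add: Aarc_def cis_KC cos_m120)

lemma cen_decomp: "cen i = 2 * pi * of_int (i div 3) + cen (i mod 3)"
proof -
  have "i = 3 * (i div 3) + i mod 3" by simp
  then have "of_int i = 3 * of_int (i div 3) + (of_int (i mod 3) :: real)" by (metis of_int_add of_int_mult of_int_numeral)
  then show ?thesis by (simp add: cen_def field_simps)
qed

context kas begin

lemma cos_ge_v: "v \<le> cos y \<longleftrightarrow> (\<exists>m::int. \<bar>y - 2 * pi * of_int m\<bar> \<le> aa v)"
  using cos_ge_iff[of "aa v" y] a_bounds by simp

lemma mem_cen: "\<bar>x - cen i\<bar> \<le> aa v \<Longrightarrow> cis x \<in> Aarc v (kidx i)"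
proof -
  assume h: "\<bar>x - cen i\<bar> \<le> aa v"
  define m where "m = i div 3"
  have ci: "cen i = 2 * pi * of_int m + cen (i mod 3)" unfolding m_def by (rule cen_decomp)
  have "i mod 3 = 0 \<or> i mod 3 = 1 \<or> i mod 3 = 2" by auto
  then show ?thesis
  proof (elim disjE)
    assume r: "i mod 3 = 0"
    have c: "cen i = 2 * pi * of_int m" using ci r by (simp add: cen_def)
    have "\<bar>x - 2 * pi * of_int m\<bar> \<le> aa v" using h unfolding c .
    then have "v \<le> cos x" unfolding cos_ge_v by blast
    moreover have "kidx i = 1" using r by (simp add: kidx_def)
    ultimately show ?thesis using Aarc1_cis by metis
  next
    assume r: "i mod 3 = 1"
    have c: "cen i = 2 * pi * of_int m + 2*pi/3" using ci r by (simp add: cen_def)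
    have "x - cen i = (x - 2*pi/3) - 2 * pi * of_int m" unfolding c by simp
    then have "\<bar>(x - 2*pi/3) - 2 * pi * of_int m\<bar> \<le> aa v" using h by simp
    then have "v \<le> cos (x - 2*pi/3)" unfolding cos_ge_v by blast
    moreover have "kidx i = 3" using r by (simp add: kidx_def)
    ultimately show ?thesis using Aarc3_cis by metis
  next
    assume r: "i mod 3 = 2"
    have c: "cen i = 2 * pi * of_int m + 4*pi/3" using ci r by (simp add: cen_def)
    have "x - cen i = (x + 2*pi/3) - 2 * pi * of_int (m + 1)" unfolding c by (simp add: algebra_simps)
    then have "\<bar>(x + 2*pi/3) - 2 * pi * of_int (m+1)\<bar> \<le> aa v" using h by simp
    then have "v \<le> cos (x + 2*pi/3)" unfolding cos_ge_v by blast
    moreover have "kidx i = 2" using r by (simp add: kidx_def)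
    ultimately show ?thesis using Aarc2_cis by metis
  qed
qed

lemma cen_mem:
  assumes "k \<in> {1,2,3}" "cis x \<in> Aarc v k"
  shows "\<exists>i. kidx i = k \<and> \<bar>x - cen i\<bar> \<le> aa v"
proof -
  consider "k = 1" | "k = 2" | "k = 3" using assms by auto
  then show ?thesis
  proof cases
    case 1
    then obtain m :: int where m: "\<bar>x - 2 * pi * of_int m\<bar> \<le> aa v" using assms Aarc1_cis cos_ge_v by auto
    have "kidx (3*m) = 1" by (simp add: kidx_def)
    moreover have "cen (3*m) = 2 * pi * of_int m" by (simp add: cen_def)
    ultimately show ?thesis using m 1 by (intro exI[of _ "3*m"]) simp
  next
    case 2
    then obtain m :: int where m: "\<bar>(x + 2*pi/3) - 2 * pi * of_int m\<bar> \<le> aa v" using assms Aarc2_cis cos_ge_v by auto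
    have "(3*m - 1) mod 3 = 2" by presburger
    then have "kidx (3*m - 1) = 2" by (simp add: kidx_def)
    moreover have "x - cen (3*m - 1) = (x + 2*pi/3) - 2 * pi * of_int m" by (simp add: cen_def field_simps)
    ultimately show ?thesis using m 2 by (intro exI[of _ "3*m - 1"]) simp
  next
    case 3
    then obtain m :: int where m: "\<bar>(x - 2*pi/3) - 2 * pi * of_int m\<bar> \<le> aa v" using assms Aarc3_cis cos_ge_v by auto
    have "kidx (3*m + 1) = 3" by (simp add: kidx_def)
    moreover have "x - cen (3*m + 1) = (x - 2*pi/3) - 2 * pi * of_int m" by (simp add: cen_def field_simps)
    ultimately show ?thesis using m 3 by (intro exI[of _ "3*m + 1"]) simp
  qed
qed


lemma ab_sum: "aa v + bb v = 2*pi/3" by (simp add: aa_def bb_def)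

end

lemma cen_alt: "cen a = (2*pi/3) * of_int a" by (simp add: cen_def)
lemma cen_less: "cen a < cen b \<longleftrightarrow> a < b"
proof -
  have p: "0 < 2*pi/3" by simp
  show ?thesis unfolding cen_alt by (simp only: mult_less_cancel_left_pos[OF p] of_int_less_iff)
qed
lemma cen_le: "cen a \<le> cen b \<longleftrightarrow> a \<le> b"
  using cen_less by (meson linorder_not_le)
lemma cen_sub: "cen j - cen i = cen (j - i)" by (simp add: cen_def field_simps)
lemma cen_m1: "cen (-1) = - (2*pi/3)" by (simp add: cen_def)
lemma cen_2: "cen 2 = 4*pi/3" by (simp add: cen_def)
lemma cen_0: "cen 0 = 0" by (simp add: cen_def)
lemma cen_succ: "cen (i + 1) = cen i + 2*pi/3" by (simp add: cen_def field_simps)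
lemma cen_pred: "cen (i - 1) = cen i - 2*pi/3" by (simp add: cen_def field_simps)

context kas begin

lemma gap_only:
  assumes "cen i - bb v < x" "x < cen i + bb v" "\<bar>x - cen j\<bar> \<le> aa v"
  shows "j = i"
proof -
  have "cen (j - i) < cen 1" "cen (-1) < cen (j - i)"
    using assms ab_sum unfolding cen_sub[symmetric] cen_1 cen_m1 by (auto simp: abs_le_iff)
  then have "j - i < 1" "-1 < j - i" unfolding cen_less by auto
  then show ?thesis by simp
qed

lemma ovl_only:
  assumes "cen i + bb v \<le> x" "x \<le> cen i + aa v" "\<bar>x - cen j\<bar> \<le> aa v"
  shows "j = i \<or> j = i + 1"
proof -
  have "cen (j - i) < cen 2" "cen (-1) < cen (j - i)"
    using assms ab_sum a_bounds e_bounds unfolding cen_sub[symmetric] cen_2 cen_m1 by (auto simp: abs_le_iff)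
  then have "j - i < 2" "-1 < j - i" unfolding cen_less by auto
  then show ?thesis by auto
qed

lemma gap_mem:
  assumes "cen i - bb v < x" "x < cen i + bb v" "k \<in> {1,2,3}"
  shows "cis x \<in> Aarc v k \<longleftrightarrow> k = kidx i"
proof
  assume "cis x \<in> Aarc v k"
  then obtain j where "kidx j = k" "\<bar>x - cen j\<bar> \<le> aa v" using cen_mem assms(3) by blast
  then show "k = kidx i" using gap_only[OF assms(1,2)] by auto
next
  assume "k = kidx i"
  moreover have "\<bar>x - cen i\<bar> \<le> aa v" using assms e_bounds a_bounds by (auto simp: abs_le_iff)
  ultimately show "cis x \<in> Aarc v k" using mem_cen by simp
qed

lemma ovl_mem:
  assumes "cen i + bb v \<le> x" "x \<le> cen i + aa v" "k \<in> {1,2,3}"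
  shows "cis x \<in> Aarc v k \<longleftrightarrow> k = kidx i \<or> k = kidx (i+1)"
proof
  assume "cis x \<in> Aarc v k"
  then obtain j where "kidx j = k" "\<bar>x - cen j\<bar> \<le> aa v" using cen_mem assms(3) by blast
  then show "k = kidx i \<or> k = kidx (i+1)" using ovl_only[OF assms(1,2)] by auto
next
  have "\<bar>x - cen i\<bar> \<le> aa v" using assms e_bounds a_bounds by (auto simp: abs_le_iff)
  moreover have "\<bar>x - cen (i+1)\<bar> \<le> aa v" using assms e_bounds a_bounds ab_sum unfolding cen_succ by (auto simp: abs_le_iff)
  moreover assume "k = kidx i \<or> k = kidx (i+1)"
  ultimately show "cis x \<in> Aarc v k" using mem_cen by auto
qed

lemma mod3_cases: "i mod 3 = 0 \<and> (i+1) mod 3 = 1 \<or> i mod 3 = 1 \<and> (i+1) mod 3 = 2 \<or> i mod 3 = 2 \<and> (i+1) mod 3 = 0"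
  for i :: int by presburger

lemma Kch_gap:
  assumes "cen i - bb v < x" "x < cen i + bb v"
  shows "Kchoice v w (cis x) = Kmap v (kidx i) (cis x)"
proof -
  obtain mu nu zeta where w: "w = (mu, nu, zeta)" by (cases w) auto
  have m1: "cis x \<in> Aarc v 1 \<longleftrightarrow> kidx i = 1" using gap_mem[OF assms, of 1] by auto
  have m2: "cis x \<in> Aarc v 2 \<longleftrightarrow> kidx i = 2" using gap_mem[OF assms, of 2] by auto
  have m3: "cis x \<in> Aarc v 3 \<longleftrightarrow> kidx i = 3" using gap_mem[OF assms, of 3] by auto
  have "kidx i = 1 \<or> kidx i = 2 \<or> kidx i = 3" using kidx_range by auto
  then show ?thesis using m1 m2 m3 unfolding Kchoice_def w by auto
qed

lemma Kch_ovl: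
  assumes "cen i + bb v \<le> x" "x \<le> cen i + aa v"
  shows "Kchoice v (2,3,1) (cis x) = Kmap v (kidx i) (cis x)"
    "Kchoice v (1,2,3) (cis x) = Kmap v (kidx (i+1)) (cis x)"
proof -
  have m1: "cis x \<in> Aarc v 1 \<longleftrightarrow> kidx i = 1 \<or> kidx (i+1) = 1" using ovl_mem[OF assms, of 1] by auto
  have m2: "cis x \<in> Aarc v 2 \<longleftrightarrow> kidx i = 2 \<or> kidx (i+1) = 2" using ovl_mem[OF assms, of 2] by auto
  have m3: "cis x \<in> Aarc v 3 \<longleftrightarrow> kidx i = 3 \<or> kidx (i+1) = 3" using ovl_mem[OF assms, of 3] by auto
  have "i mod 3 = 0 \<and> (i+1) mod 3 = 1 \<or> i mod 3 = 1 \<and> (i+1) mod 3 = 2 \<or> i mod 3 = 2 \<and> (i+1) mod 3 = 0"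
    by (rule mod3_cases)
  then have "kidx i = 1 \<and> kidx (i+1) = 3 \<or> kidx i = 3 \<and> kidx (i+1) = 2 \<or> kidx i = 2 \<and> kidx (i+1) = 1"
    unfolding kidx_def by auto
  then show "Kchoice v (2,3,1) (cis x) = Kmap v (kidx i) (cis x)"
    "Kchoice v (1,2,3) (cis x) = Kmap v (kidx (i+1)) (cis x)"
    using m1 m2 m3 unfolding Kchoice_def by auto
qed

end



context kas begin

lemma K1_cis: assumes "y \<in> {-pi<..pi}" shows "K1 v (cis (y + 2*pi* of_int m)) = cis (psi v y)"
  unfolding K1_def cis_per Arg_cis[OF assms] psi_def cc_def ..

lemma Kmap_cis:
  assumes h: "\<bar>x - cen i\<bar> \<le> aa v"
  shows "Kmap v (kidx i) (cis x) = cis (FF v i x)"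
proof -
  define m where "m = i div 3"
  have ci: "cen i = 2 * pi * of_int m + cen (i mod 3)" unfolding m_def by (rule cen_decomp)
  have y: "x - cen i \<in> {-pi<..pi}" using h a_bounds by (auto simp: abs_le_iff)
  have "i mod 3 = 0 \<or> i mod 3 = 1 \<or> i mod 3 = 2" by auto
  then show ?thesis
  proof (elim disjE)
    assume r: "i mod 3 = 0"
    have c: "cen i = 2 * pi * of_int m" using ci r by (simp add: cen_def)
    have k: "kidx i = 1" using r by (simp add: kidx_def)
    have "Kmap v (kidx i) (cis x) = K1 v (cis ((x - cen i) + 2*pi* of_int m))"
      unfolding k Kmap_def c by simp
    also have "\<dots> = cis (psi v (x - cen i))" by (rule K1_cis[OF y])
    also have "\<dots> = cis (FF v i x)" unfolding FF_def by (rule cis_eqI[of _ _ "-m"]) (simp add: c)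
    finally show ?thesis .
  next
    assume r: "i mod 3 = 1"
    have c: "cen i = 2 * pi * of_int m + 2*pi/3" using ci r by (simp add: cen_def)
    have k: "kidx i = 3" using r by (simp add: kidx_def)
    have e1: "cis (- 2 * pi / 3) * cis x = cis ((x - cen i) + 2*pi* of_int m)"
      unfolding cis_mult c by (rule arg_cong[where f=cis]) (simp add: algebra_simps)
    have "Kmap v (kidx i) (cis x) = cis (2 * pi / 3) * K1 v (cis ((x - cen i) + 2*pi* of_int m))"
      unfolding k Kmap_def e1 by simp
    also have "\<dots> = cis (2 * pi / 3) * cis (psi v (x - cen i))" by (simp only: K1_cis[OF y])
    also have "\<dots> = cis (FF v i x)" unfolding FF_def cis_mult by (rule cis_eqI[of _ _ "-m"]) (simp add: c)
    finally show ?thesis .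
  next
    assume r: "i mod 3 = 2"
    have c: "cen i = 2 * pi * of_int m + 4*pi/3" using ci r by (simp add: cen_def)
    have k: "kidx i = 2" using r by (simp add: kidx_def)
    have e1: "cis (2 * pi / 3) * cis x = cis ((x - cen i) + 2*pi* of_int (m+1))"
      unfolding cis_mult c by (rule arg_cong[where f=cis]) (simp add: algebra_simps)
    have "Kmap v (kidx i) (cis x) = cis (- 2 * pi / 3) * K1 v (cis ((x - cen i) + 2*pi* of_int (m+1)))"
      unfolding k Kmap_def e1 by simp
    also have "\<dots> = cis (- 2 * pi / 3) * cis (psi v (x - cen i))" by (simp only: K1_cis[OF y])
    also have "\<dots> = cis (FF v i x)" unfolding FF_def cis_mult by (rule cis_eqI[of _ _ "-(m+1)"]) (simp add: c algebra_simps)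
    finally show ?thesis .
  qed
qed


lemma Kgap:
  assumes "cen i - bb v < x" "x < cen i + bb v"
  shows "Kchoice v w (cis x) = cis (FF v i x)"
proof -
  have "\<bar>x - cen i\<bar> \<le> aa v" using assms e_bounds a_bounds by (auto simp: abs_le_iff)
  then show ?thesis using Kch_gap[OF assms] Kmap_cis by simp
qed

lemma KW0:
  assumes "cen i - bb v < x" "x \<le> cen i + aa v"
  shows "Kchoice v (2,3,1) (cis x) = cis (FF v i x)"
proof (cases "x < cen i + bb v")
  case True then show ?thesis using Kgap assms by blast
next
  case False
  have "\<bar>x - cen i\<bar> \<le> aa v" using assms e_bounds a_bounds by (auto simp: abs_le_iff)
  then show ?thesis using Kch_ovl(1)[of i x] False assms Kmap_cis by simp
qed

lemma KW1:
  assumes "cen i - aa v \<le> x" "x < cen i + bb v"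
  shows "Kchoice v (1,2,3) (cis x) = cis (FF v i x)"
proof (cases "cen i - bb v < x")
  case True then show ?thesis using Kgap assms by blast
next
  case False
  have o: "cen (i-1) + bb v \<le> x" "x \<le> cen (i-1) + aa v"
    using assms False ab_sum unfolding cen_pred by auto
  have "\<bar>x - cen i\<bar> \<le> aa v" using assms e_bounds a_bounds by (auto simp: abs_le_iff)
  then show ?thesis using Kch_ovl(2)[OF o] Kmap_cis by simp
qed

lemma ovl_bfA:
  assumes "cen i + bb v \<le> x" "x \<le> cen i + aa v"
  shows "cis x \<in> bfA v"
proof -
  have m1: "cis x \<in> Aarc v 1 \<longleftrightarrow> kidx i = 1 \<or> kidx (i+1) = 1" using ovl_mem[OF assms, of 1] by auto
  have m2: "cis x \<in> Aarc v 2 \<longleftrightarrow> kidx i = 2 \<or> kidx (i+1) = 2" using ovl_mem[OF assms, of 2] by auto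
  have m3: "cis x \<in> Aarc v 3 \<longleftrightarrow> kidx i = 3 \<or> kidx (i+1) = 3" using ovl_mem[OF assms, of 3] by auto
  have "i mod 3 = 0 \<and> (i+1) mod 3 = 1 \<or> i mod 3 = 1 \<and> (i+1) mod 3 = 2 \<or> i mod 3 = 2 \<and> (i+1) mod 3 = 0"
    by (rule mod3_cases)
  then have "kidx i = 1 \<and> kidx (i+1) = 3 \<or> kidx i = 3 \<and> kidx (i+1) = 2 \<or> kidx i = 2 \<and> kidx (i+1) = 1"
    unfolding kidx_def by auto
  then show ?thesis using m1 m2 m3 unfolding bfA_def by auto
qed

lemma notbfA_gap:
  assumes "cis x \<notin> bfA v"
  shows "\<exists>i. cen i - bb v < x \<and> x < cen i + bb v"
proof -
  define q where "q = (x + bb v) * 3 / (2*pi)"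
  define i where "i = \<lfloor>q\<rfloor>"
  have "of_int i \<le> q" "q < of_int i + 1" unfolding i_def by linarith+
  note iq = this
  have qq: "(2*pi/3) * q = x + bb v" unfolding q_def by simp
  have lo: "cen i \<le> x + bb v"
  proof -
    have "cen i = (2*pi/3) * of_int i" by (rule cen_alt)
    also have "\<dots> \<le> (2*pi/3) * q" by (rule mult_left_mono) (use iq in simp_all)
    finally show ?thesis unfolding qq .
  qed
  have hi: "x + bb v < cen i + 2*pi/3"
  proof -
    have "x + bb v = (2*pi/3) * q" using qq by simp
    also have "\<dots> < (2*pi/3) * (of_int i + 1)" by (rule mult_strict_left_mono) (use iq in simp_all)
    also have "\<dots> = cen i + 2*pi/3" unfolding cen_alt by (simp add: algebra_simps)
    finally show ?thesis .
  qed
  show ?thesis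
  proof (cases "x = cen i - bb v")
    case True
    then have "cen (i-1) + bb v \<le> x" "x \<le> cen (i-1) + aa v" using ab_sum e_bounds unfolding cen_pred by auto
    then show ?thesis using ovl_bfA assms by blast
  next
    case False
    show ?thesis
    proof (cases "x < cen i + bb v")
      case True then show ?thesis using False lo by (intro exI[of _ i]) auto
    next
      case F2: False
      then have "cen i + bb v \<le> x" "x \<le> cen i + aa v" using hi ab_sum by auto
      then show ?thesis using ovl_bfA assms by blast
    qed
  qed
qed

lemma Aint_sub:
  "Aarc v (kidx i) \<inter> Aarc v (kidx (i+1)) \<subseteq> cis ` {cen i + bb v .. cen i + aa v}"
proof
  fix p assume p: "p \<in> Aarc v (kidx i) \<inter> Aarc v (kidx (i+1))"
  then have "p \<in> KC" by (auto simp: Aarc_def split: if_splits)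
  then have n: "norm p = 1" by (simp add: KC_def)
  define x where "x = Arg p"
  have "p \<noteq> 0" using n by auto
  then have px: "p = cis x" unfolding x_def using n cis_Arg[of p] by (auto simp: sgn_div_norm)
  obtain j1 where j1: "kidx j1 = kidx i" "\<bar>x - cen j1\<bar> \<le> aa v"
    using cen_mem[of "kidx i" x] p px kidx_range by auto
  obtain j2 where j2: "kidx j2 = kidx (i+1)" "\<bar>x - cen j2\<bar> \<le> aa v"
    using cen_mem[of "kidx (i+1)" x] p px kidx_range by auto
  have "cen (j2 - j1) < cen 2" "cen (-2) < cen (j2 - j1)"
    using j1 j2 a_bounds unfolding cen_sub[symmetric] cen_2 by (auto simp: abs_le_iff cen_def)
  then have d: "j2 - j1 < 2" "-2 < j2 - j1" unfolding cen_less by auto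
  have "j1 mod 3 = i mod 3" "j2 mod 3 = (i+1) mod 3" using j1(1) j2(1) kidx_eq by auto
  then have "j2 = j1 + 1" using d by presburger
  then have xr: "cen j1 + bb v \<le> x" "x \<le> cen j1 + aa v"
    using j1 j2 ab_sum \<open>j2 = j1 + 1\<close> cen_succ[of j1] by (auto simp: abs_le_iff)
  have "j1 = i + 3 * ((j1 - i) div 3)" using \<open>j1 mod 3 = i mod 3\<close> by presburger
  then obtain m where jm: "j1 = i + 3*m" by blast
  have cj: "cen j1 = cen i + 2 * pi * of_int m" unfolding jm cen_add cen_3m ..
  have "p = cis (x - 2 * pi * of_int m)" unfolding px by (rule cis_eqI[of _ _ m]) simp
  moreover have "x - 2 * pi * of_int m \<in> {cen i + bb v .. cen i + aa v}" using xr cj by auto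
  ultimately show "p \<in> cis ` {cen i + bb v .. cen i + aa v}" by blast
qed

end



lemma isCont_cis: "isCont cis x"
proof -
  have "continuous_on UNIV (\<lambda>x. cis x)" by (intro continuous_intros)
  then show ?thesis using continuous_on_eq_continuous_at[of UNIV cis] by auto
qed

lemma K1_isCont:
  assumes "Re p > 0"
  shows "isCont (K1 v) p"
proof -
  have p0: "p \<noteq> 0" using assms by auto
  have "p \<notin> \<real>\<^sub>\<le>\<^sub>0" using assms by (auto simp: complex_nonpos_Reals_iff)
  then have cA: "isCont Arg p" using continuous_at_Arg by simp
  have "cos (Arg p) = Re p / cmod p"
    using cis_Arg[OF p0] by (metis Re_sgn cis.sel(1))
  then have "cos (Arg p) > 0" using assms p0 by simp
  then have "Arg p \<noteq> pi" by auto
  then have "- pi < Arg p" "Arg p < pi" using Arg_bounded[of p] by auto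
  then have "cos (Arg p / 2) > 0" by (intro cos_gt_zero_pi) auto
  then have ct: "isCont tan (Arg p / 2)" by (intro isCont_tan) simp
  have "isCont (\<lambda>p. Arg p / 2) p" using cA by (intro continuous_intros) auto
  then have "isCont (\<lambda>p. tan (Arg p / 2)) p" using ct by (rule isCont_o2)
  then have "isCont (\<lambda>p. pi - 2 * arctan ((1 + v) / (1 - v) * tan (Arg p / 2))) p"
    by (intro continuous_intros isCont_o2[OF _ isCont_arctan])
  then have "isCont (\<lambda>p. cis (pi - 2 * arctan ((1 + v) / (1 - v) * tan (Arg p / 2)))) p"
    by (rule isCont_o2[OF _ isCont_cis])
  then show ?thesis unfolding K1_def[abs_def] .
qed

lemma Re_rot: "Re (cis t * p) = cos t * Re p - sin t * Im p" by simp

lemma Kmap_KC: "Kmap v k p \<in> KC"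
  by (simp add: Kmap_def K1_def KC_def norm_mult)

lemma Kchoice_KC: "Kchoice v w p \<in> KC"
  by (cases w) (simp add: Kchoice_def Kmap_KC)

lemma Kiter_KC: "U \<subseteq> KC \<Longrightarrow> Kiter v \<omega> n ` U \<subseteq> KC"
  by (cases n) (auto simp: Kchoice_KC)

lemma Kiter_Suc_img: "Kiter v \<omega> (Suc n) ` U = Kchoice v (\<omega> n) ` (Kiter v \<omega> n ` U)"
  by (simp add: image_comp)

context kas begin

lemma Kmap_isCont:
  assumes "k \<in> {1,2,3}" "p \<in> Aarc v k"
  shows "isCont (Kmap v k) p"
proof -
  have c120: "cos (2*pi/3) = -1/2" "sin (2*pi/3) = sqrt 3 / 2" by (simp_all add: cos_120 sin120)
  have m120: "cos (- 2 * pi / 3) = -1/2" "sin (- 2 * pi / 3) = - (sqrt 3 / 2)"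
  proof -
    have e: "- 2 * pi / 3 = - (2*pi/3)" by simp
    show "cos (- 2 * pi / 3) = -1/2" "sin (- 2 * pi / 3) = - (sqrt 3 / 2)"
      unfolding e cos_minus sin_minus c120 by simp_all
  qed
  consider "k = 1" | "k = 2" | "k = 3" using assms by auto
  then show ?thesis
  proof cases
    case 1
    then have "Re p \<ge> v" using assms by (simp add: Aarc_def)
    then have "isCont (K1 v) p" using v0 by (intro K1_isCont) simp
    moreover have "Kmap v k = K1 v" using 1 by (simp add: Kmap_def[abs_def])
    ultimately show ?thesis by simp
  next
    case 2
    then have "- (Re p + sqrt 3 * Im p) / 2 \<ge> v" using assms by (simp add: Aarc_def)
    moreover have "Re (cis (2 * pi / 3) * p) = - (Re p + sqrt 3 * Im p) / 2"
      unfolding Re_rot c120 by (simp add: field_simps)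
    ultimately have "Re (cis (2 * pi / 3) * p) > 0" using v0 by simp
    then have "isCont (K1 v) (cis (2 * pi / 3) * p)" by (rule K1_isCont)
    moreover have "isCont (\<lambda>p. cis (2 * pi / 3) * p) p" by (intro continuous_intros)
    ultimately have "isCont (\<lambda>p. K1 v (cis (2 * pi / 3) * p)) p" using isCont_o2 by blast
    then have "isCont (\<lambda>p. cis (- 2 * pi / 3) * K1 v (cis (2 * pi / 3) * p)) p"
      by (intro continuous_intros)
    moreover have "Kmap v k = (\<lambda>p. cis (- 2 * pi / 3) * K1 v (cis (2 * pi / 3) * p))"
      using 2 by (simp add: Kmap_def[abs_def])
    ultimately show ?thesis by simp
  next
    case 3
    then have "- (Re p - sqrt 3 * Im p) / 2 \<ge> v" using assms by (simp add: Aarc_def)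
    moreover have "Re (cis (- 2 * pi / 3) * p) = - (Re p - sqrt 3 * Im p) / 2"
      unfolding Re_rot m120 by (simp add: field_simps)
    ultimately have "Re (cis (- 2 * pi / 3) * p) > 0" using v0 by simp
    then have "isCont (K1 v) (cis (- 2 * pi / 3) * p)" by (rule K1_isCont)
    moreover have "isCont (\<lambda>p. cis (- 2 * pi / 3) * p) p" by (intro continuous_intros)
    ultimately have "isCont (\<lambda>p. K1 v (cis (- 2 * pi / 3) * p)) p" using isCont_o2 by blast
    then have "isCont (\<lambda>p. cis (2 * pi / 3) * K1 v (cis (- 2 * pi / 3) * p)) p"
      by (intro continuous_intros)
    moreover have "Kmap v k = (\<lambda>p. cis (2 * pi / 3) * K1 v (cis (- 2 * pi / 3) * p))"
      using 3 by (simp add: Kmap_def[abs_def])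
    ultimately show ?thesis by simp
  qed
qed


lemma cover: "p \<in> KC \<Longrightarrow> \<exists>k\<in>{1,2,3}. p \<in> Aarc v k"
proof -
  assume p: "p \<in> KC"
  show ?thesis
  proof (cases "p \<in> bfA v")
    case True then show ?thesis by (auto simp: bfA_def)
  next
    case False
    have n: "norm p = 1" using p by (simp add: KC_def)
    then have "p \<noteq> 0" by auto
    then have px: "p = cis (Arg p)" using n cis_Arg[of p] by (auto simp: sgn_div_norm)
    then obtain i where "cen i - bb v < Arg p" "Arg p < cen i + bb v" using notbfA_gap False by metis
    then have "\<bar>Arg p - cen i\<bar> \<le> aa v" using e_bounds a_bounds by (auto simp: abs_le_iff)
    then have "p \<in> Aarc v (kidx i)" using mem_cen px by metis
    then show ?thesis using kidx_range by blast
  qed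
qed

lemma one_arc:
  assumes S: "S \<subseteq> KC" "S \<inter> bfA v = {}" "connected S"
  shows "\<exists>k\<in>{1,2,3}. \<forall>p\<in>S. p \<in> Aarc v k \<and> Kchoice v w p = Kmap v k p"
proof -
  define F1 where "F1 = (\<lambda>p::complex. Re p)"
  define F2 where "F2 = (\<lambda>p::complex. - (Re p + sqrt 3 * Im p) / 2)"
  define F3 where "F3 = (\<lambda>p::complex. - (Re p - sqrt 3 * Im p) / 2)"
  have cF: "continuous_on UNIV F1" "continuous_on UNIV F2" "continuous_on UNIV F3"
    unfolding F1_def F2_def F3_def by (auto intro!: continuous_intros)
  have cv: "continuous_on UNIV (\<lambda>p::complex. v)" by (intro continuous_intros)
  define W1 where "W1 = {p. F2 p < v} \<inter> {p. F3 p < v}"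
  define W2 where "W2 = {p. F1 p < v} \<inter> {p. F3 p < v}"
  define W3 where "W3 = {p. F1 p < v} \<inter> {p. F2 p < v}"
  have oW: "open W1" "open W2" "open W3" unfolding W1_def W2_def W3_def
    by (intro open_Int open_Collect_less cF cv)+
  have A: "\<And>p. p \<in> KC \<Longrightarrow> (p \<in> Aarc v 1 \<longleftrightarrow> v \<le> F1 p) \<and> (p \<in> Aarc v 2 \<longleftrightarrow> v \<le> F2 p) \<and> (p \<in> Aarc v 3 \<longleftrightarrow> v \<le> F3 p)"
    by (simp add: Aarc_def F1_def F2_def F3_def)
  have nb: "\<And>p. p \<in> S \<Longrightarrow> p \<notin> bfA v" using S by auto
  have cov: "\<And>p. p \<in> S \<Longrightarrow> p \<in> Aarc v 1 \<or> p \<in> Aarc v 2 \<or> p \<in> Aarc v 3" using cover S by blast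
  have ex: "\<And>p. p \<in> S \<Longrightarrow> (p \<in> Aarc v 1 \<longleftrightarrow> p \<notin> Aarc v 2 \<and> p \<notin> Aarc v 3) \<and>
      (p \<in> Aarc v 2 \<longleftrightarrow> p \<notin> Aarc v 1 \<and> p \<notin> Aarc v 3) \<and> (p \<in> Aarc v 3 \<longleftrightarrow> p \<notin> Aarc v 1 \<and> p \<notin> Aarc v 2)"
  proof -
    fix p assume pS: "p \<in> S"
    have "p \<notin> bfA v" using nb pS .
    then have "\<not> (p \<in> Aarc v 1 \<and> p \<in> Aarc v 2)" "\<not> (p \<in> Aarc v 2 \<and> p \<in> Aarc v 3)" "\<not> (p \<in> Aarc v 1 \<and> p \<in> Aarc v 3)"
      unfolding bfA_def by blast+
    then show "?thesis p" using cov[OF pS] by blast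
  qed
  have memW: "\<And>p. p \<in> S \<Longrightarrow> (p \<in> W1 \<longleftrightarrow> p \<in> Aarc v 1) \<and> (p \<in> W2 \<longleftrightarrow> p \<in> Aarc v 2) \<and> (p \<in> W3 \<longleftrightarrow> p \<in> Aarc v 3)"
  proof -
    fix p assume pS: "p \<in> S"
    have "p \<in> KC" using pS S by auto
    note a = A[OF this]
    have w: "p \<in> W1 \<longleftrightarrow> \<not> v \<le> F2 p \<and> \<not> v \<le> F3 p" "p \<in> W2 \<longleftrightarrow> \<not> v \<le> F1 p \<and> \<not> v \<le> F3 p"
      "p \<in> W3 \<longleftrightarrow> \<not> v \<le> F1 p \<and> \<not> v \<le> F2 p" unfolding W1_def W2_def W3_def by auto
    show "(p \<in> W1 \<longleftrightarrow> p \<in> Aarc v 1) \<and> (p \<in> W2 \<longleftrightarrow> p \<in> Aarc v 2) \<and> (p \<in> W3 \<longleftrightarrow> p \<in> Aarc v 3)"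
      unfolding w using a ex[OF pS] by blast
  qed
  have Kv: "\<And>p k. p \<in> S \<Longrightarrow> k \<in> {1,2,3} \<Longrightarrow> p \<in> Aarc v k \<Longrightarrow> Kchoice v w p = Kmap v k p"
  proof -
    fix p k assume pS: "p \<in> S" and k: "k \<in> {1,2,3}" and pk: "p \<in> Aarc v k"
    obtain mu nu zeta where w: "w = (mu, nu, zeta)" by (cases w) auto
    have "p \<notin> bfA v" using nb pS .
    then have n: "p \<notin> Aarc v 1 \<inter> Aarc v 2" "p \<notin> Aarc v 2 \<inter> Aarc v 3" "p \<notin> Aarc v 1 \<inter> Aarc v 3"
      unfolding bfA_def by blast+
    consider "k = 1" | "k = 2" | "k = 3" using k by auto
    then show "Kchoice v w p = Kmap v k p"
    proof cases
      case 1 then show ?thesis using pk n unfolding Kchoice_def w by simp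
    next
      case 2 then have "p \<notin> Aarc v 1" using pk n by blast
      then show ?thesis using 2 pk n unfolding Kchoice_def w by simp
    next
      case 3 then have "p \<notin> Aarc v 1" "p \<notin> Aarc v 2" using pk n by blast+
      then show ?thesis using 3 pk n unfolding Kchoice_def w by simp
    qed
  qed
  have d1: "W1 \<inter> (W2 \<union> W3) \<inter> S = {}" using memW ex by blast
  have s1: "S \<subseteq> W1 \<union> (W2 \<union> W3)" using memW cov by blast
  have "W1 \<inter> S = {} \<or> (W2 \<union> W3) \<inter> S = {}"
    using connectedD[OF S(3) oW(1) open_Un[OF oW(2,3)] d1 s1] .
  then have "S \<subseteq> W1 \<or> S \<subseteq> W2 \<or> S \<subseteq> W3"
  proof
    assume "(W2 \<union> W3) \<inter> S = {}" then show ?thesis using s1 by blast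
  next
    assume h: "W1 \<inter> S = {}"
    have d2: "W2 \<inter> W3 \<inter> S = {}" using memW ex by blast
    have s2: "S \<subseteq> W2 \<union> W3" using s1 h by blast
    have "W2 \<inter> S = {} \<or> W3 \<inter> S = {}" using connectedD[OF S(3) oW(2) oW(3) d2 s2] .
    then show ?thesis using s2 by blast
  qed
  then show ?thesis
  proof (elim disjE)
    assume "S \<subseteq> W1" then show ?thesis using memW Kv by (intro bexI[of _ 1]) auto
  next
    assume "S \<subseteq> W2" then show ?thesis using memW Kv by (intro bexI[of _ 2]) auto
  next
    assume "S \<subseteq> W3" then show ?thesis using memW Kv by (intro bexI[of _ 3]) auto
  qed
qed

lemma conn_step:
  assumes S: "S \<subseteq> KC" "S \<inter> bfA v = {}" "connected S"
  shows "connected (Kchoice v w ` S)"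
proof -
  obtain k where k: "k \<in> {1,2,3}" "\<forall>p\<in>S. p \<in> Aarc v k \<and> Kchoice v w p = Kmap v k p"
    using one_arc[OF S] by blast
  have "continuous_on S (Kmap v k)"
    using k Kmap_isCont by (intro continuous_at_imp_continuous_on) blast
  then have "connected (Kmap v k ` S)" using S(3) by (rule connected_continuous_image)
  moreover have "Kchoice v w ` S = Kmap v k ` S" using k by (auto intro: image_cong)
  ultimately show ?thesis by simp
qed

end



context kas begin

lemma FF_cont: "continuous_on {cen i - aa v .. cen i + aa v} (FF v i)"
proof -
  have "continuous_on {cen i - aa v .. cen i + aa v} (\<lambda>x. psi v (x - cen i))"
    by (rule continuous_on_compose2[OF psi_cont]) (auto intro!: continuous_intros)
  then show ?thesis unfolding FF_def[abs_def] by (intro continuous_intros)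
qed

lemma FF_gain:
  assumes "cen i - aa v \<le> l" "l \<le> p" "p \<le> q" "q \<le> r" "r \<le> cen i + aa v"
    "cen i - pi/3 \<le> p" "q \<le> cen i + pi/3"
  shows "(r - l) + (lam v - 1) * (q - p) \<le> FF v i l - FF v i r"
  using psi_gain[of "l - cen i" "p - cen i" "q - cen i" "r - cen i"] assms
  unfolding FF_def by auto

lemma FF_img:
  assumes "cen i - aa v \<le> l" "l \<le> r" "r \<le> cen i + aa v"
  shows "{FF v i r .. FF v i l} \<subseteq> FF v i ` {l..r}"
proof
  fix y assume y: "y \<in> {FF v i r .. FF v i l}"
  have "continuous_on {l..r} (FF v i)"
    by (rule continuous_on_subset[OF FF_cont]) (use assms in auto)
  then obtain x where "l \<le> x" "x \<le> r" "FF v i x = y"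
    using IVT2'[of "FF v i" r y l] y assms by auto
  then show "y \<in> FF v i ` {l..r}" by auto
qed

lemma step_img:
  assumes "cen i - aa v \<le> l" "l \<le> r" "r \<le> cen i + aa v"
    and K: "\<And>x. l \<le> x \<Longrightarrow> x \<le> r \<Longrightarrow> Kchoice v w (cis x) = cis (FF v i x)"
  shows "cis ` {FF v i r .. FF v i l} \<subseteq> Kchoice v w ` (cis ` {l..r})"
proof
  fix z assume "z \<in> cis ` {FF v i r .. FF v i l}"
  then obtain y where y: "y \<in> {FF v i r .. FF v i l}" "z = cis y" by blast
  then obtain x where x: "x \<in> {l..r}" "y = FF v i x" using FF_img[OF assms(1-3)] by blast
  then have "z = Kchoice v w (cis x)" using K y by auto
  then show "z \<in> Kchoice v w ` (cis ` {l..r})" using x by blast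
qed

lemma gapint:
  assumes "l \<le> r" "cis ` {l..r} \<subseteq> S" "S \<inter> bfA v = {}"
  shows "\<exists>i. cen i - bb v < l \<and> r < cen i + bb v"
proof -
  have "cis l \<in> S" using assms(1,2) by (meson atLeastAtMost_iff image_subset_iff order_refl)
  then have "cis l \<notin> bfA v" using assms(3) by auto
  then obtain i where i: "cen i - bb v < l" "l < cen i + bb v" using notbfA_gap by blast
  have "r < cen i + bb v"
  proof (rule ccontr)
    assume "\<not> r < cen i + bb v"
    then have "cis (cen i + bb v) \<in> S" using assms i by auto
    moreover have "cis (cen i + bb v) \<in> bfA v" using e_bounds by (intro ovl_bfA[of i]) auto
    ultimately show False using assms by auto
  qed
  then show ?thesis using i by blast
qed

lemma part_i_ex:
  assumes "l0 < r0" "cis ` {l0..r0} \<subseteq> U"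
  shows "\<exists>N. Kiter v \<omega> N ` U \<inter> bfA v \<noteq> {}"
proof (rule ccontr)
  assume "\<not> ?thesis"
  then have H: "\<And>N. Kiter v \<omega> N ` U \<inter> bfA v = {}" by auto
  define L0 where "L0 = r0 - l0"
  define g where "g = (lam v - 1) * L0"
  have L0: "L0 > 0" using assms unfolding L0_def by simp
  have g: "g > 0" using L0 lam_gt1 unfolding g_def by simp
  have inv: "\<exists>l r. l \<le> r \<and> L0 + real n * g \<le> r - l \<and> cis ` {l..r} \<subseteq> Kiter v \<omega> n ` U" for n
  proof (induction n)
    case 0
    show ?case using assms by (intro exI[of _ l0] exI[of _ r0]) (auto simp: L0_def)
  next
    case (Suc n)
    then obtain l r where lr: "l \<le> r" "L0 + real n * g \<le> r - l" "cis ` {l..r} \<subseteq> Kiter v \<omega> n ` U" by blast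
    obtain i where i: "cen i - bb v < l" "r < cen i + bb v" using gapint[OF lr(1) lr(3) H] by blast
    have r1: "cen i - aa v \<le> l" "r \<le> cen i + aa v" using i e_bounds by auto
    have K: "\<And>x. l \<le> x \<Longrightarrow> x \<le> r \<Longrightarrow> Kchoice v (\<omega> n) (cis x) = cis (FF v i x)"
      using i by (intro Kgap) auto
    have "cis ` {FF v i r .. FF v i l} \<subseteq> Kchoice v (\<omega> n) ` (cis ` {l..r})"
      by (rule step_img[OF r1(1) lr(1) r1(2) K])
    also have "\<dots> \<subseteq> Kiter v \<omega> (Suc n) ` U" unfolding Kiter_Suc_img using lr(3) by blast
    finally have sub: "cis ` {FF v i r .. FF v i l} \<subseteq> Kiter v \<omega> (Suc n) ` U" .
    have gain: "(r - l) + (lam v - 1) * (r - l) \<le> FF v i l - FF v i r"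
      using i e_bounds lr(1) by (intro FF_gain) auto
    have "L0 \<le> r - l" using lr(2) g by (smt (verit) of_nat_0_le_iff mult_nonneg_nonneg)
    then have "g \<le> (lam v - 1) * (r - l)" unfolding g_def using lam_gt1 by (intro mult_left_mono) auto
    then have "L0 + real (Suc n) * g \<le> FF v i l - FF v i r" using gain lr(2) by (simp add: algebra_simps)
    moreover have "FF v i r \<le> FF v i l" using gain lr(1) lam_gt1
      by (smt (verit) mult_nonneg_nonneg)
    ultimately show ?case using sub by blast
  qed
  obtain n where n: "2 * bb v < real n * g" using reals_Archimedean3[OF g] by blast
  obtain l r where lr: "l \<le> r" "L0 + real n * g \<le> r - l" "cis ` {l..r} \<subseteq> Kiter v \<omega> n ` U"
    using inv by blast
  obtain i where i: "cen i - bb v < l" "r < cen i + bb v" using gapint[OF lr(1) lr(3) H] by blast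
  show False using i lr(2) n L0 by linarith
qed

lemma part_i:
  assumes "U \<subseteq> KC" "connected U" "l0 < r0" "cis ` {l0..r0} \<subseteq> U"
  shows "\<exists>N. connected (Kiter v \<omega> N ` U) \<and> Kiter v \<omega> N ` U \<inter> bfA v \<noteq> {}"
proof -
  define P where "P = (\<lambda>N. Kiter v \<omega> N ` U \<inter> bfA v \<noteq> {})"
  have ex: "\<exists>N. P N" using part_i_ex[OF assms(3,4)] unfolding P_def .
  define N where "N = (LEAST N. P N)"
  have PN: "P N" unfolding N_def by (rule LeastI_ex[OF ex])
  have before: "\<And>n. n < N \<Longrightarrow> \<not> P n" unfolding N_def by (rule not_less_Least)
  have "n \<le> N \<Longrightarrow> connected (Kiter v \<omega> n ` U)" for n
  proof (induction n)
    case 0 then show ?case using assms(2) by simp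
  next
    case (Suc n)
    then have "n < N" by simp
    then have "Kiter v \<omega> n ` U \<inter> bfA v = {}" using before unfolding P_def by blast
    moreover have "Kiter v \<omega> n ` U \<subseteq> KC" by (rule Kiter_KC[OF assms(1)])
    moreover have "connected (Kiter v \<omega> n ` U)" using Suc by simp
    ultimately show ?case unfolding Kiter_Suc_img by (intro conn_step)
  qed
  then show ?thesis using PN unfolding P_def by blast
qed

end



definition dn :: "real \<Rightarrow> real \<Rightarrow> real \<Rightarrow> bool" where
  "dn v l r = (\<exists>k::int. l \<le> of_int k * pi / 3 - ee v \<and> of_int k * pi / 3 + ee v \<le> r)"

definition QQ :: "real \<Rightarrow> real \<times> real \<Rightarrow> (nat \<times> nat \<times> nat) \<times> real \<times> real \<Rightarrow> bool" where
  "QQ v s t = (case s of (l, r) \<Rightarrow> case t of (w, l', r') \<Rightarrow>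
     w \<in> {(2,3,1), (1,2,3)} \<and> l' \<le> r' \<and> (r - l) + (lam v - 1) * min ((r - l) / 2) (ee v) \<le> r' - l'
     \<and> cis ` {l'..r'} \<subseteq> Kchoice v w ` (cis ` {l..r}))"

fun stf :: "(real \<times> real \<Rightarrow> (nat \<times> nat \<times> nat) \<times> real \<times> real) \<Rightarrow> real \<times> real \<Rightarrow> nat \<Rightarrow> real \<times> real" where
  "stf f s0 0 = s0"
| "stf f s0 (Suc n) = snd (f (stf f s0 n))"

lemma QQ_iff: "QQ v (l, r) (w, l', r') \<longleftrightarrow> w \<in> {(2,3,1), (1,2,3)} \<and> l' \<le> r' \<and>
   (r - l) + (lam v - 1) * min ((r - l) / 2) (ee v) \<le> r' - l' \<and> cis ` {l'..r'} \<subseteq> Kchoice v w ` (cis ` {l..r})"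
  by (simp add: QQ_def)

lemma floor_pi3:
  fixes y :: real
  shows "of_int \<lfloor>y * 3 / pi\<rfloor> * pi / 3 \<le> y" "y < (of_int \<lfloor>y * 3 / pi\<rfloor> + 1) * pi / 3"
proof -
  define q where "q = y * 3 / pi"
  have "of_int \<lfloor>q\<rfloor> \<le> q" "q < of_int \<lfloor>q\<rfloor> + 1" by linarith+
  have pp: "0 < pi / 3" by simp
  have "of_int \<lfloor>q\<rfloor> * (pi / 3) \<le> q * (pi / 3)" by (rule mult_right_mono) (use \<open>of_int \<lfloor>q\<rfloor> \<le> q\<close> in simp_all)
  moreover have "q * (pi / 3) = y" unfolding q_def by simp
  ultimately show "of_int \<lfloor>y * 3 / pi\<rfloor> * pi / 3 \<le> y" unfolding q_def by simp
  have "q * (pi / 3) < (of_int \<lfloor>q\<rfloor> + 1) * (pi / 3)" by (rule mult_strict_right_mono) (use \<open>q < of_int \<lfloor>q\<rfloor> + 1\<close> in simp_all)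
  then show "y < (of_int \<lfloor>y * 3 / pi\<rfloor> + 1) * pi / 3" using \<open>q * (pi / 3) = y\<close> unfolding q_def by simp
qed

context kas begin

lemma notdn_len:
  assumes "l \<le> r" "\<not> dn v l r"
  shows "r - l < pi/3 + 2 * ee v"
proof -
  define k where "k = \<lfloor>(l + ee v) * 3 / pi\<rfloor> + 1"
  have a: "of_int (k - 1) * pi / 3 \<le> l + ee v" "l + ee v < of_int k * pi / 3"
    using floor_pi3[of "l + ee v"] unfolding k_def by auto
  then have "l \<le> of_int k * pi / 3 - ee v" by simp
  then have "r < of_int k * pi / 3 + ee v" using assms(2) unfolding dn_def by force
  moreover have "of_int k * pi / 3 \<le> l + ee v + pi / 3" using a(1) by (simp add: algebra_simps)
  ultimately show ?thesis by simp
qed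

lemma apply_step:
  assumes "l \<le> p" "p \<le> q" "q \<le> r" "cen i - aa v \<le> l" "r \<le> cen i + aa v"
    "cen i - pi/3 \<le> p" "q \<le> cen i + pi/3"
    and K: "\<And>x. l \<le> x \<Longrightarrow> x \<le> r \<Longrightarrow> Kchoice v w (cis x) = cis (FF v i x)"
    and m: "min ((r - l) / 2) (ee v) \<le> q - p" and w: "w \<in> {(2,3,1), (1,2,3)}"
  shows "\<exists>t. QQ v (l, r) t"
proof -
  have lr: "l \<le> r" using assms by linarith
  have gain: "(r - l) + (lam v - 1) * (q - p) \<le> FF v i l - FF v i r"
    using assms by (intro FF_gain) auto
  have "(lam v - 1) * min ((r - l) / 2) (ee v) \<le> (lam v - 1) * (q - p)"
    using m lam_gt1 by (intro mult_left_mono) auto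
  then have g2: "(r - l) + (lam v - 1) * min ((r - l) / 2) (ee v) \<le> FF v i l - FF v i r" using gain by linarith
  have "0 \<le> (lam v - 1) * min ((r - l) / 2) (ee v)" using lam_gt1 e_bounds lr by (intro mult_nonneg_nonneg) auto
  then have le: "FF v i r \<le> FF v i l" using g2 lr by linarith
  have "cis ` {FF v i r .. FF v i l} \<subseteq> Kchoice v w ` (cis ` {l..r})"
    using assms lr by (intro step_img) auto
  then have "QQ v (l, r) (w, FF v i r, FF v i l)" unfolding QQ_def using w le g2 by auto
  then show ?thesis by blast
qed


lemma cen_pi3: "cen j = of_int (2*j) * pi / 3" by (simp add: cen_def)
lemma cen_pi3': "cen j + pi/3 = of_int (2*j+1) * pi / 3" by (simp add: cen_def field_simps)
lemma cen_pi3'': "cen (j+1) = of_int (2*j+2) * pi / 3" by (simp add: cen_def field_simps)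

lemma step2:
  assumes lr: "l \<le> r" and nd: "\<not> dn v l r"
  shows "\<exists>t. QQ v (l, r) t"
proof -
  define k where "k = \<lfloor>(l + ee v) * 3 / pi\<rfloor>"
  have a: "of_int k * pi / 3 \<le> l + ee v" "l + ee v < (of_int k + 1) * pi / 3"
    using floor_pi3[of "l + ee v"] unfolding k_def by auto
  have l1: "of_int k * pi / 3 - ee v \<le> l" "l \<le> of_int (k+1) * pi / 3 - ee v" using a by auto
  have r1: "r < of_int (k+1) * pi / 3 + ee v"
  proof (rule ccontr)
    assume "\<not> r < of_int (k+1) * pi / 3 + ee v"
    then have "dn v l r" unfolding dn_def using l1(2) by (intro exI[of _ "k+1"]) auto
    then show False using nd by simp
  qed
  define j where "j = k div 2"
  have "k = 2*j \<or> k = 2*j+1" unfolding j_def by presburger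
  have eb: "0 < ee v" "ee v < pi/6" "aa v = pi/3 + ee v" "bb v = pi/3 - ee v" using e_bounds by auto
  show ?thesis
  proof (cases "k = 2*j")
    case True
    have c1: "of_int k * pi / 3 = cen j" unfolding True cen_pi3 ..
    have c2: "of_int (k+1) * pi / 3 = cen j + pi/3" unfolding True cen_pi3' ..
    have h: "cen j - ee v \<le> l" "l \<le> cen j + pi/3 - ee v" "r < cen j + pi/3 + ee v"
      using l1 r1 unfolding c1 c2 by auto
    show ?thesis
    proof (rule apply_step[of l l "min r (cen j + pi/3)" r j "(2,3,1)"])
      show "\<And>x. l \<le> x \<Longrightarrow> x \<le> r \<Longrightarrow> Kchoice v (2,3,1) (cis x) = cis (FF v j x)"
        using h eb by (intro KW0) auto
      show "min ((r - l) / 2) (ee v) \<le> min r (cen j + pi / 3) - l" using h lr eb by (auto simp: min_def)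
    qed (use h lr eb in auto)
  next
    case False
    then have kk: "k = 2*j+1" using \<open>k = 2*j \<or> k = 2*j+1\<close> by auto
    have c1: "of_int k * pi / 3 = cen j + pi/3" unfolding kk cen_pi3' ..
    have c2: "of_int (k+1) * pi / 3 = cen (j+1)" unfolding kk cen_pi3'' by simp
    have cs: "cen (j+1) = cen j + 2*pi/3" by (rule cen_succ)
    have h: "cen j + pi/3 - ee v \<le> l" "l \<le> cen (j+1) - ee v" "r < cen (j+1) + ee v"
      using l1 r1 unfolding c1 c2 by auto
    show ?thesis
    proof (cases "(l + r) / 2 \<le> cen j + pi/3 \<and> r \<le> cen j + aa v")
      case True
      show ?thesis
      proof (rule apply_step[of l l "(l + r) / 2" r j "(2,3,1)"])
        show "\<And>x. l \<le> x \<Longrightarrow> x \<le> r \<Longrightarrow> Kchoice v (2,3,1) (cis x) = cis (FF v j x)"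
          using h eb True by (intro KW0) auto
      qed (use h lr eb True cs in auto)
    next
      case F2: False
      show ?thesis
      proof (rule apply_step[of l "max l (cen j + pi/3)" r r "j+1" "(1,2,3)"])
        show "\<And>x. l \<le> x \<Longrightarrow> x \<le> r \<Longrightarrow> Kchoice v (1,2,3) (cis x) = cis (FF v (j+1) x)"
          using h eb cs by (intro KW1) auto
        show "min ((r - l) / 2) (ee v) \<le> r - max l (cen j + pi / 3)"
          using h lr eb F2 by (auto simp: min_def max_def)
        show "max l (cen j + pi / 3) \<le> r" using h lr eb F2 by (auto simp: max_def)
      qed (use h lr eb cs in auto)
    qed
  qed
qed


lemma done_cover:
  assumes "l \<le> r" "dn v l r" "cis ` {l..r} \<subseteq> S"
  shows "\<exists>i. Aarc v (kidx i) \<inter> Aarc v (kidx (i+1)) \<subseteq> S \<or> Aarc v (kidx i) \<inter> Aarc v (kidx (i+1)) \<subseteq> Kchoice v w ` S"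
proof -
  obtain k :: int where k: "l \<le> of_int k * pi / 3 - ee v" "of_int k * pi / 3 + ee v \<le> r"
    using assms(2) unfolding dn_def by blast
  define j where "j = k div 2"
  have "k = 2*j \<or> k = 2*j+1" unfolding j_def by presburger
  have eb: "0 < ee v" "ee v < pi/6" "aa v = pi/3 + ee v" "bb v = pi/3 - ee v" "ee v < bb v" using e_bounds by auto
  show ?thesis
  proof (cases "k = 2*j")
    case False
    then have kk: "k = 2*j+1" using \<open>k = 2*j \<or> k = 2*j+1\<close> by auto
    have c1: "of_int k * pi / 3 = cen j + pi/3" unfolding kk cen_pi3' ..
    have "cis ` {cen j + bb v .. cen j + aa v} \<subseteq> cis ` {l..r}" using k eb unfolding c1 by auto
    then have "Aarc v (kidx j) \<inter> Aarc v (kidx (j+1)) \<subseteq> S" using Aint_sub[of j] assms(3) by blast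
    then show ?thesis by blast
  next
    case True
    have c1: "of_int k * pi / 3 = cen j" unfolding True cen_pi3 ..
    have sub: "cis ` {cen j - ee v .. cen j + ee v} \<subseteq> S" using k assms(3) unfolding c1 by auto
    have "cis ` {FF v j (cen j + ee v) .. FF v j (cen j - ee v)} \<subseteq> Kchoice v w ` (cis ` {cen j - ee v .. cen j + ee v})"
    proof (rule step_img)
      show "\<And>x. cen j - ee v \<le> x \<Longrightarrow> x \<le> cen j + ee v \<Longrightarrow> Kchoice v w (cis x) = cis (FF v j x)"
        using eb by (intro Kgap) auto
    qed (use eb in auto)
    also have "\<dots> \<subseteq> Kchoice v w ` S" using sub by blast
    finally have s2: "cis ` {FF v j (cen j + ee v) .. FF v j (cen j - ee v)} \<subseteq> Kchoice v w ` S" .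
    have p1: "ee v \<le> psi v 0 - psi v (ee v)" using psi_dec[of 0 "ee v"] eb by simp
    have p2: "ee v \<le> psi v (- ee v) - psi v 0" using psi_dec[of "- ee v" 0] eb by simp
    have "FF v j (cen j + ee v) \<le> cen (j+1) + bb v" "cen (j+1) + aa v \<le> FF v j (cen j - ee v)"
      using p1 p2 eb psi_0 cen_succ[of j] unfolding FF_def by auto
    then have "cis ` {cen (j+1) + bb v .. cen (j+1) + aa v} \<subseteq> Kchoice v w ` S" using s2 by fastforce
    then have "Aarc v (kidx (j+1)) \<inter> Aarc v (kidx (j+1+1)) \<subseteq> Kchoice v w ` S" using Aint_sub[of "j+1"] by blast
    then show ?thesis by blast
  qed
qed

lemma part_ii:
  assumes "l0 < r0" "cis ` {l0..r0} \<subseteq> U"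
  shows "\<exists>\<omega>\<in>SigmaSp. \<exists>M::nat. \<exists>\<alpha>\<in>{1,2,3::nat}. \<exists>\<beta>\<in>{1,2,3::nat}. \<alpha> \<noteq> \<beta> \<and>
             Aarc v \<alpha> \<inter> Aarc v \<beta> \<subseteq> Kiter v \<omega> M ` U"
proof -
  define nxt where "nxt = (\<lambda>s. if \<exists>t. QQ v s t then (SOME t. QQ v s t) else ((2::nat,3::nat,1::nat), s))"
  define st where "st = stf nxt (l0, r0)"
  define \<omega> where "\<omega> = (\<lambda>n. fst (nxt (st n)))"
  have nxtQ: "\<And>s. \<exists>t. QQ v s t \<Longrightarrow> QQ v s (nxt s)" unfolding nxt_def by (auto intro: someI_ex)
  have wset: "\<And>s. fst (nxt s) \<in> {(2,3,1), (1,2,3)}"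
  proof -
    fix s :: "real \<times> real"
    show "fst (nxt s) \<in> {(2,3,1), (1,2,3)}"
    proof (cases "\<exists>t. QQ v s t")
      case True
      then have q: "QQ v s (nxt s)" by (rule nxtQ)
      obtain w l' r' where "nxt s = (w, l', r')" by (cases "nxt s") auto
      moreover obtain l r where "s = (l, r)" by (cases s) auto
      ultimately show ?thesis using q QQ_iff by auto
    next
      case False then show ?thesis unfolding nxt_def by simp
    qed
  qed
  have \<omega>S: "\<omega> \<in> SigmaSp" unfolding SigmaSp_def mem_Collect_eq
  proof
    fix n
    have "\<omega> n \<in> {(2,3,1), (1,2,3)}" unfolding \<omega>_def by (rule wset)
    then show "\<omega> n \<in> {1,2} \<times> {2,3} \<times> {1,3}" by auto
  qed
  define L0 where "L0 = r0 - l0"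
  define g where "g = (lam v - 1) * min (L0 / 2) (ee v)"
  have L0: "L0 > 0" using assms unfolding L0_def by simp
  have g: "g > 0" using L0 lam_gt1 e_bounds unfolding g_def by simp
  define ND where "ND = (\<lambda>n. \<not> dn v (fst (st n)) (snd (st n)))"
  have inv: "(\<forall>m<n. ND m) \<longrightarrow> fst (st n) \<le> snd (st n) \<and> L0 + real n * g \<le> snd (st n) - fst (st n)
     \<and> cis ` {fst (st n) .. snd (st n)} \<subseteq> Kiter v \<omega> n ` U" for n
  proof (induction n)
    case 0 show ?case using assms unfolding st_def L0_def by simp
  next
    case (Suc n)
    show ?case
    proof
      assume all: "\<forall>m<Suc n. ND m"
      then have IH: "fst (st n) \<le> snd (st n)" "L0 + real n * g \<le> snd (st n) - fst (st n)"
         "cis ` {fst (st n) .. snd (st n)} \<subseteq> Kiter v \<omega> n ` U" using Suc by auto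
      obtain l r where lr: "st n = (l, r)" by (cases "st n") auto
      have ndn: "\<not> dn v l r" using all lr unfolding ND_def by (metis fst_conv snd_conv lessI)
      have "\<exists>t. QQ v (l, r) t" using step2[OF _ ndn] IH lr by simp
      then have q: "QQ v (l, r) (nxt (l, r))" by (rule nxtQ)
      obtain w l' r' where t: "nxt (l, r) = (w, l', r')" by (cases "nxt (l, r)") auto
      have sS: "st (Suc n) = (l', r')" unfolding st_def using t lr unfolding st_def by simp
      have wn: "\<omega> n = w" unfolding \<omega>_def using t lr by simp
      have Q: "l' \<le> r'" "(r - l) + (lam v - 1) * min ((r - l) / 2) (ee v) \<le> r' - l'"
        "cis ` {l'..r'} \<subseteq> Kchoice v w ` (cis ` {l..r})" using q t QQ_iff by auto
      have "L0 \<le> r - l" using IH lr g by (smt (verit) of_nat_0_le_iff mult_nonneg_nonneg fst_conv snd_conv)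
      then have "min (L0 / 2) (ee v) \<le> min ((r - l) / 2) (ee v)" by auto
      then have "g \<le> (lam v - 1) * min ((r - l) / 2) (ee v)" unfolding g_def using lam_gt1 by (intro mult_left_mono) auto
      then have "L0 + real (Suc n) * g \<le> r' - l'" using Q(2) IH(2) lr by (simp add: algebra_simps)
      moreover have "cis ` {l'..r'} \<subseteq> Kiter v \<omega> (Suc n) ` U"
        using Q(3) IH(3) lr unfolding Kiter_Suc_img wn by fastforce
      ultimately show "fst (st (Suc n)) \<le> snd (st (Suc n)) \<and> L0 + real (Suc n) * g \<le> snd (st (Suc n)) - fst (st (Suc n))
        \<and> cis ` {fst (st (Suc n)) .. snd (st (Suc n))} \<subseteq> Kiter v \<omega> (Suc n) ` U"
        using sS Q(1) by simp
    qed
  qed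
  have exd: "\<exists>n. \<not> ND n"
  proof (rule ccontr)
    assume "\<not> (\<exists>n. \<not> ND n)"
    then have allND: "\<And>n. ND n" by auto
    obtain n where n: "pi/3 + 2 * ee v < real n * g" using reals_Archimedean3[OF g] by blast
    have I: "fst (st n) \<le> snd (st n)" "L0 + real n * g \<le> snd (st n) - fst (st n)" using inv[of n] allND by auto
    have "snd (st n) - fst (st n) < pi/3 + 2 * ee v" using notdn_len[OF I(1)] allND unfolding ND_def by auto
    then show False using I(2) n L0 by linarith
  qed
  define N where "N = (LEAST n. \<not> ND n)"
  have dN: "\<not> ND N" unfolding N_def by (rule LeastI_ex[OF exd])
  have bN: "\<forall>m<N. ND m" unfolding N_def using not_less_Least by blast
  have I: "fst (st N) \<le> snd (st N)" "cis ` {fst (st N) .. snd (st N)} \<subseteq> Kiter v \<omega> N ` U"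
    using inv[of N] bN by auto
  obtain i where i: "Aarc v (kidx i) \<inter> Aarc v (kidx (i+1)) \<subseteq> Kiter v \<omega> N ` U \<or>
      Aarc v (kidx i) \<inter> Aarc v (kidx (i+1)) \<subseteq> Kchoice v (\<omega> N) ` (Kiter v \<omega> N ` U)"
    using done_cover[OF I(1) _ I(2), of "\<omega> N"] dN unfolding ND_def by blast
  then obtain M where "Aarc v (kidx i) \<inter> Aarc v (kidx (i+1)) \<subseteq> Kiter v \<omega> M ` U"
    unfolding Kiter_Suc_img[symmetric] by blast
  moreover have "kidx i \<in> {1,2,3}" "kidx (i+1) \<in> {1,2,3}" "kidx (i+1) \<noteq> kidx i" using kidx_range kidx_succ_ne by auto
  ultimately show ?thesis using \<omega>S by blast
qed

end


lemma arc_in_U: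
  assumes "openin (top_of_set KC) U" "U \<noteq> {}"
  shows "\<exists>l0 r0. l0 < r0 \<and> cis ` {l0..r0} \<subseteq> U"
proof -
  obtain p where p: "p \<in> U" using assms(2) by blast
  have UK: "U \<subseteq> KC" using assms(1) by (rule openin_imp_subset)
  obtain e where e: "e > 0" "\<forall>x'\<in>KC. dist x' p < e \<longrightarrow> x' \<in> U"
    using assms(1) p unfolding openin_euclidean_subtopology_iff by blast
  have "norm p = 1" using p UK by (auto simp: KC_def)
  moreover have "p \<noteq> 0" using \<open>norm p = 1\<close> by auto
  ultimately have px: "p = cis (Arg p)" using cis_Arg[of p] by (auto simp: sgn_div_norm)
  have "continuous (at (Arg p)) cis" using isCont_cis .
  then obtain d where d: "d > 0" "\<forall>x'. dist x' (Arg p) < d \<longrightarrow> dist (cis x') (cis (Arg p)) < e"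
    using e(1) unfolding continuous_at_eps_delta by blast
  have "cis ` {Arg p - d/2 .. Arg p + d/2} \<subseteq> U"
  proof
    fix z assume "z \<in> cis ` {Arg p - d/2 .. Arg p + d/2}"
    then obtain x where x: "x \<in> {Arg p - d/2 .. Arg p + d/2}" "z = cis x" by blast
    then have "dist x (Arg p) < d" using d(1) by (auto simp: dist_real_def abs_le_iff)
    then have "dist z p < e" using d(2) x px by metis
    then show "z \<in> U" using e(2) x by (simp add: cis_KC)
  qed
  moreover have "Arg p - d/2 < Arg p + d/2" using d by simp
  ultimately show ?thesis by blast
qed

theorem lemma1:
  fixes v :: real and U :: "complex set"
  assumes "0 < v" and "v < 1/2"
    and "openin (top_of_set KC) U" and "connected U" and "U \<noteq> {}"
  shows "(\<forall>\<omega>\<in>SigmaSp. \<exists>N::nat. connected (Kiter v \<omega> N ` U) \<and> Kiter v \<omega> N ` U \<inter> bfA v \<noteq> {})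
       \<and> (\<exists>\<omega>\<in>SigmaSp. \<exists>M::nat. \<exists>\<alpha>\<in>{1,2,3::nat}. \<exists>\<beta>\<in>{1,2,3::nat}. \<alpha> \<noteq> \<beta> \<and>
             Aarc v \<alpha> \<inter> Aarc v \<beta> \<subseteq> Kiter v \<omega> M ` U)"
proof -
  interpret kas v using assms(1,2) by unfold_locales
  obtain l0 r0 where lr: "l0 < r0" "cis ` {l0..r0} \<subseteq> U" using arc_in_U[OF assms(3,5)] by blast
  have UK: "U \<subseteq> KC" using assms(3) by (rule openin_imp_subset)
  show ?thesis
    using part_i[OF UK assms(4) lr] part_ii[OF lr] by blast
qed


end
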